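(* Consider the genetic algorithm with adaptive population size (APGA) described in the context, with maximum lifetime parameter $MaxLT$ and an arbitrary initial population size $P(0)\ge 1$. Then, regardless of $P(0)$, the population size after $MaxLT$ generations satisfies $$P(MaxLT) \le 2\,MaxLT + 1.$$
   Context: APGA is a steady-state genetic algorithm in which every individual carries a remaining lifetime (RLT). Parameters: an initial population size $P(0)$ and lifetime bounds $1\le MinLT\le MaxLT$; every individual, whether in the initial population or newly created, is assigned at creation a lifetime (its initial RLT) which is a positive integer between $MinLT$ and $MaxLT$ (the assignment may depend on fitness, e.g. via a bi-linear rule, but never exceeds $MaxLT$). Generation $t\ge 1$ proceeds as follows, starting from the population at the end of generation $t-1$: (1) decrement by 1 the RLT of every member except the best (highest-fitness) member of the population; (2) select 2 individuals, apply crossover and mutation to obtain 2 offspring, evaluate them and insert them into the population; (3) remove from the population all members whose RLT equals 0; (4) assign lifetimes (RLT values) to the 2 new members. $P(t)$ denotes the population size at the end of generation $t$, and $P(0)$ the size of the initial population. *)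

theory Defs
  imports Complex_Main
begin

text \<open>Individuals are abstract identities of a linearly ordered type 'i; fit gives the
  (fixed) fitness of each individual.\<close>

definition is_best :: "('i::linorder \<Rightarrow> real) \<Rightarrow> 'i set \<Rightarrow> 'i \<Rightarrow> bool" where
  "is_best fit S b \<longleftrightarrow> b \<in> S \<and>
     (\<forall>x\<in>S. x \<noteq> b \<longrightarrow> fit x < fit b \<or> (fit x = fit b \<and> x < b))"

text \<open>pop t = population (set of individuals) at the end of generation t,
  rlt t x = remaining lifetime of member x at the end of generation t.\<close>

definition apga_run ::
  "nat \<Rightarrow> nat \<Rightarrow> ('i::linorder \<Rightarrow> real) \<Rightarrow> (nat \<Rightarrow> 'i set) \<Rightarrow> (nat \<Rightarrow> 'i \<Rightarrow> nat) \<Rightarrow> bool" where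
  "apga_run MinLT MaxLT fit pop rlt \<longleftrightarrow>
     1 \<le> MinLT \<and> MinLT \<le> MaxLT \<and>
     finite (pop 0) \<and> pop 0 \<noteq> {} \<and>
     (\<forall>x\<in>pop 0. MinLT \<le> rlt 0 x \<and> rlt 0 x \<le> MaxLT) \<and>
     (\<forall>t. \<exists>b c1 c2.
        is_best fit (pop t) b \<and>
        c1 \<noteq> c2 \<and> c1 \<notin> (\<Union>s\<le>t. pop s) \<and> c2 \<notin> (\<Union>s\<le>t. pop s) \<and>
        (let dec = (\<lambda>x. if x = b then rlt t x else rlt t x - 1) in
           pop (Suc t) = {x \<in> pop t. dec x \<noteq> 0} \<union> {c1, c2} \<and>
           (\<forall>x\<in>pop t. dec x \<noteq> 0 \<longrightarrow> rlt (Suc t) x = dec x)) \<and>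
        MinLT \<le> rlt (Suc t) c1 \<and> rlt (Suc t) c1 \<le> MaxLT \<and>
        MinLT \<le> rlt (Suc t) c2 \<and> rlt (Suc t) c2 \<le> MaxLT)"

end

theory Submission
  imports Defs
begin

lemma choice3: "\<forall>t. \<exists>b c1 c2. P t b c1 c2 \<Longrightarrow> \<exists>B C1 C2. \<forall>t. P t (B t) (C1 t) (C2 t)"
  by metis

theorem theorem1:
  fixes fit :: "'i::linorder \<Rightarrow> real"
    and pop :: "nat \<Rightarrow> 'i set" and rlt :: "nat \<Rightarrow> 'i \<Rightarrow> nat"
  assumes "apga_run MinLT MaxLT fit pop rlt"
  shows "card (pop MaxLT) \<le> 2 * MaxLT + 1"
proof -
  have A: "1 \<le> MinLT" "MinLT \<le> MaxLT" "finite (pop 0)"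
    "\<forall>x\<in>pop 0. MinLT \<le> rlt 0 x \<and> rlt 0 x \<le> MaxLT"
    using assms unfolding apga_run_def by auto
  have H0: "\<forall>t. \<exists>b c1 c2.
        is_best fit (pop t) b \<and>
        c1 \<noteq> c2 \<and> c1 \<notin> (\<Union>s\<le>t. pop s) \<and> c2 \<notin> (\<Union>s\<le>t. pop s) \<and>
        (let dec = (\<lambda>x. if x = b then rlt t x else rlt t x - 1) in
           pop (Suc t) = {x \<in> pop t. dec x \<noteq> 0} \<union> {c1, c2} \<and>
           (\<forall>x\<in>pop t. dec x \<noteq> 0 \<longrightarrow> rlt (Suc t) x = dec x)) \<and>
        MinLT \<le> rlt (Suc t) c1 \<and> rlt (Suc t) c1 \<le> MaxLT \<and>
        MinLT \<le> rlt (Suc t) c2 \<and> rlt (Suc t) c2 \<le> MaxLT"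
    (is "\<forall>t. \<exists>b c1 c2. ?P t b c1 c2")
    using assms[unfolded apga_run_def] by (elim conjE)
  obtain B C1 C2 where H: "\<forall>t. ?P t (B t) (C1 t) (C2 t)"
    using choice3[OF H0] by (elim exE)
  define dec where "dec t x = (if x = B t then rlt t x else rlt t x - 1)" for t x
  have best: "is_best fit (pop t) (B t)" for t using H[rule_format, of t] by (elim conjE)
  have popS: "pop (Suc t) = {x \<in> pop t. dec t x \<noteq> 0} \<union> {C1 t, C2 t}" for t
    using H[rule_format, of t] unfolding dec_def Let_def by (elim conjE) (simp only:)
  have rltS: "x \<in> pop t \<Longrightarrow> dec t x \<noteq> 0 \<Longrightarrow> rlt (Suc t) x = dec t x" for t x
    using H[rule_format, of t] unfolding dec_def Let_def by (elim conjE) blast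
  have cnew: "s \<le> t \<Longrightarrow> C1 t \<notin> pop s \<and> C2 t \<notin> pop s" for t s
    using H[rule_format, of t] by (elim conjE) blast
  have crlt: "MinLT \<le> rlt (Suc t) (C1 t) \<and> MinLT \<le> rlt (Suc t) (C2 t)" for t
    using H[rule_format, of t] by (elim conjE) simp
  define Ch where "Ch n = (\<Union>s<n. {C1 s, C2 s})" for n
  have chS: "Ch (Suc n) = Ch n \<union> {C1 n, C2 n}" for n
    unfolding Ch_def by (auto simp: lessThan_Suc)
  have fch: "finite (Ch n)" for n unfolding Ch_def by auto
  have cardch: "card (Ch n) \<le> 2 * n" for n
  proof (induction n)
    case 0 then show ?case by (simp add: Ch_def)
  next
    case (Suc n)
    have "card (Ch (Suc n)) \<le> card (Ch n) + card {C1 n, C2 n}"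
      unfolding chS by (rule card_Un_le)
    also have "card {C1 n, C2 n} \<le> 2" by (simp add: card_insert_le_m1)
    finally show ?case using Suc by simp
  qed
  have ch0: "x \<in> Ch n \<Longrightarrow> x \<notin> pop 0" for x n
    unfolding Ch_def using cnew by blast
  have pos: "\<And>x. x \<in> pop t \<Longrightarrow> rlt t x \<noteq> 0" for t
  proof (induction t)
    case 0 then show ?case using A by fastforce
  next
    case (Suc t)
    then show ?case using popS[of t] rltS[of _ t] crlt[of t] A(1) by fastforce
  qed
  have popsub: "pop t \<subseteq> pop 0 \<union> Ch t" for t
  proof (induction t)
    case 0 then show ?case by simp
  next
    case (Suc t) then show ?case using popS[of t] chS[of t] by blast
  qed
  have bestin: "B t \<in> pop t" for t using best[of t] unfolding is_best_def by blast
  have Bchain: "B t \<in> {B 0} \<union> Ch t" for t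
  proof (induction t)
    case 0 then show ?case by simp
  next
    case (Suc t)
    show ?case
    proof (cases "B (Suc t) \<in> {C1 t, C2 t}")
      case True then show ?thesis using chS by blast
    next
      case False
      then have "B (Suc t) \<in> pop t" using bestin[of "Suc t"] popS[of t] by blast
      moreover have "B t \<in> pop (Suc t)"
        using popS[of t] bestin[of t] pos[of "B t" t] unfolding dec_def by auto
      ultimately have "B (Suc t) = B t"
        using best[of t] best[of "Suc t"] unfolding is_best_def by force
      then show ?thesis using Suc chS by auto
    qed
  qed
  have dies: "x \<in> pop 0 \<Longrightarrow> x \<noteq> B 0 \<Longrightarrow> x \<in> pop t \<Longrightarrow> rlt t x + t \<le> MaxLT" for x t
  proof (induction t)
    case 0 then show ?case using A by auto
  next
    case (Suc t)
    have xn: "x \<notin> {C1 t, C2 t}" using cnew[of 0 t] Suc.prems(1) by auto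
    then have xt: "x \<in> pop t" and d: "dec t x \<noteq> 0" using Suc.prems(3) popS[of t] by auto
    have "x \<noteq> B t" using Bchain[of t] ch0[of x t] Suc.prems by auto
    then have "dec t x = rlt t x - 1" unfolding dec_def by simp
    then show ?case using rltS[OF xt d] Suc.IH[OF Suc.prems(1,2) xt] d by simp
  qed
  have "pop MaxLT \<subseteq> {B 0} \<union> Ch MaxLT"
  proof
    fix x assume x: "x \<in> pop MaxLT"
    show "x \<in> {B 0} \<union> Ch MaxLT"
    proof (rule ccontr)
      assume n: "x \<notin> {B 0} \<union> Ch MaxLT"
      then have "x \<in> pop 0" using popsub x by blast
      then have "rlt MaxLT x + MaxLT \<le> MaxLT" using dies n x by blast
      then show False using pos[OF x] by simp
    qed
  qed
  then have "card (pop MaxLT) \<le> card ({B 0} \<union> Ch MaxLT)"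
    by (intro card_mono) (auto simp: fch)
  also have "\<dots> \<le> 1 + card (Ch MaxLT)" using card_Un_le[of "{B 0}"] by simp
  finally show ?thesis using cardch[of MaxLT] by simp
qed

end
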